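(* Let $P$ be a finite poset and $L\subseteq k[x_P]$ a $P$-stable monomial ideal. If $\mathfrak{p}$ is an associated prime ideal of $L$, then $\mathfrak{p}=(x_p)_{p\in I}$ for some poset ideal $I\subseteq P$.
   Context: $k$ is a field and $k[x_P]$ the polynomial ring in variables $x_p$, $p\in P$. For $b\in P$, a $b$-chain is a multichain $C: p_1\le\dots\le p_r$ with $p_r\le b$; its length is $r$, $m_C=\prod x_{p_i}$; $C$ is in a monomial $m$ if $m_C\mid m$; a longest $b$-chain in $m$ is one of maximal length among $b$-chains in $m$; $C$ goes through $a$ if $a\le b$ and $a$ is comparable to every $p_i$. For an antichain $B$, $m_B=\prod_{b\in B}x_b$. A monomial ideal $I$ is $P$-stable if whenever $m=n\,m_B\in I$ ($n$ a monomial, $B$ an antichain) and $a\in P$ is such that for every $b\in B$ some longest $b$-chain in $m$ goes through $a$, then $n\,x_a\in I$. A poset ideal is a down-closed subset. *)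

theory Defs
  imports "HOL-Library.Poly_Mapping"
begin

text \<open>The polynomial ring k[x_P]: polynomials are finitely supported maps from
monomials (exponent vectors P =>0 nat) to coefficients in k.
The poset P is the (finite) type 'a with its partial order.\<close>

type_synonym ('a, 'k) mpoly = "('a \<Rightarrow>\<^sub>0 nat) \<Rightarrow>\<^sub>0 'k"

definition monom :: "('a \<Rightarrow>\<^sub>0 nat) \<Rightarrow> ('a, 'k::comm_ring_1) mpoly" where
  "monom \<alpha> = Poly_Mapping.single \<alpha> 1"

definition var_exp :: "'a \<Rightarrow> ('a \<Rightarrow>\<^sub>0 nat)" where
  "var_exp p = Poly_Mapping.single p 1"

definition is_ideal :: "'r::comm_ring_1 set \<Rightarrow> bool" where
  "is_ideal I \<longleftrightarrow> 0 \<in> I \<and> (\<forall>f\<in>I. \<forall>g\<in>I. f + g \<in> I) \<and> (\<forall>f\<in>I. \<forall>r. r * f \<in> I)"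

definition ideal_gen :: "'r::comm_ring_1 set \<Rightarrow> 'r set" where
  "ideal_gen S = \<Inter>{I. is_ideal I \<and> S \<subseteq> I}"

definition is_prime_ideal :: "'r::comm_ring_1 set \<Rightarrow> bool" where
  "is_prime_ideal I \<longleftrightarrow> is_ideal I \<and> 1 \<notin> I \<and> (\<forall>f g. f * g \<in> I \<longrightarrow> f \<in> I \<or> g \<in> I)"

definition associated_prime :: "'r::comm_ring_1 set \<Rightarrow> 'r set \<Rightarrow> bool" where
  "associated_prime L p \<longleftrightarrow> is_prime_ideal p \<and> (\<exists>f. p = {g. g * f \<in> L})"

definition monomial_ideal :: "('a, 'k::comm_ring_1) mpoly set \<Rightarrow> bool" where
  "monomial_ideal L \<longleftrightarrow> (\<exists>M. L = ideal_gen (monom ` M))"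

definition mdvd :: "('a \<Rightarrow>\<^sub>0 nat) \<Rightarrow> ('a \<Rightarrow>\<^sub>0 nat) \<Rightarrow> bool" where
  "mdvd m m' \<longleftrightarrow> (\<forall>p. Poly_Mapping.lookup m p \<le> Poly_Mapping.lookup m' p)"

definition is_bchain :: "'a::order \<Rightarrow> 'a list \<Rightarrow> bool" where
  "is_bchain b C \<longleftrightarrow> sorted_wrt (\<le>) C \<and> (C \<noteq> [] \<longrightarrow> last C \<le> b)"

definition chain_mon :: "'a list \<Rightarrow> ('a \<Rightarrow>\<^sub>0 nat)" where
  "chain_mon C = sum_list (map var_exp C)"

definition chain_in :: "'a list \<Rightarrow> ('a \<Rightarrow>\<^sub>0 nat) \<Rightarrow> bool" where
  "chain_in C m \<longleftrightarrow> mdvd (chain_mon C) m"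

definition longest_bchain :: "'a::order \<Rightarrow> ('a \<Rightarrow>\<^sub>0 nat) \<Rightarrow> 'a list \<Rightarrow> bool" where
  "longest_bchain b m C \<longleftrightarrow> is_bchain b C \<and> chain_in C m \<and>
     (\<forall>D. is_bchain b D \<and> chain_in D m \<longrightarrow> length D \<le> length C)"

definition goes_through :: "'a::order \<Rightarrow> 'a \<Rightarrow> 'a list \<Rightarrow> bool" where
  "goes_through b a C \<longleftrightarrow> a \<le> b \<and> (\<forall>p\<in>set C. a \<le> p \<or> p \<le> a)"

definition antichain :: "'a::order set \<Rightarrow> bool" where
  "antichain B \<longleftrightarrow> (\<forall>x\<in>B. \<forall>y\<in>B. x \<le> y \<longrightarrow> x = y)"

definition antichain_mon :: "'a set \<Rightarrow> ('a \<Rightarrow>\<^sub>0 nat)" where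
  "antichain_mon B = (\<Sum>b\<in>B. var_exp b)"

definition P_stable :: "('a::{finite,order}, 'k::comm_ring_1) mpoly set \<Rightarrow> bool" where
  "P_stable L \<longleftrightarrow> monomial_ideal L \<and>
    (\<forall>n B a. antichain B \<and> monom (n + antichain_mon B) \<in> L \<and>
       (\<forall>b\<in>B. \<exists>C. longest_bchain b (n + antichain_mon B) C \<and> goes_through b a C)
       \<longrightarrow> monom (n + var_exp a) \<in> L)"

definition poset_ideal :: "'a::order set \<Rightarrow> bool" where
  "poset_ideal I \<longleftrightarrow> (\<forall>x\<in>I. \<forall>y. y \<le> x \<longrightarrow> y \<in> I)"

end

theory Submission
  imports Defs
begin

lemma nzd:
  fixes f g :: "('a::finite \<Rightarrow>\<^sub>0 nat) \<Rightarrow>\<^sub>0 'k::field"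
  assumes "f \<noteq> 0" "g \<noteq> 0" shows "f * g \<noteq> 0"
proof -
  obtain e :: "'a \<Rightarrow> nat" where inje: "inj e"
    using finite_imp_inj_to_nat_seg[of "UNIV::'a set"] by auto
  define E :: "('a \<Rightarrow>\<^sub>0 nat) \<Rightarrow> (nat \<Rightarrow>\<^sub>0 nat)" where
    "E \<alpha> = (\<Sum>i\<in>UNIV. Poly_Mapping.single (e i) (Poly_Mapping.lookup \<alpha> i))" for \<alpha>
  have lE: "Poly_Mapping.lookup (E \<alpha>) (e j) = Poly_Mapping.lookup \<alpha> j" for \<alpha> j
  proof -
    have "Poly_Mapping.lookup (E \<alpha>) (e j) = (\<Sum>i\<in>UNIV. if i = j then Poly_Mapping.lookup \<alpha> i else 0)"
      unfolding E_def lookup_sum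
      by (intro sum.cong refl) (auto simp: lookup_single when_def dest: injD[OF inje])
    then show ?thesis by simp
  qed
  have Einj: "E a = E b \<Longrightarrow> a = b" for a b
    by (rule poly_mapping_eqI) (metis lE)
  have Eadd: "E (a + b) = E a + E b" for a b
    unfolding E_def by (simp add: lookup_add single_add sum.distrib)
  define F where "F = Poly_Mapping.keys f"
  define G where "G = Poly_Mapping.keys g"
  have F: "finite F" "F \<noteq> {}" using assms by (auto simp: F_def)
  have G: "finite G" "G \<noteq> {}" using assms by (auto simp: G_def)
  have "Max (E ` F) \<in> E ` F" using F by (intro Max_in) auto
  then obtain a0 where a0: "a0 \<in> F" "E a0 = Max (E ` F)" by auto
  have "Max (E ` G) \<in> E ` G" using G by (intro Max_in) auto
  then obtain b0 where b0: "b0 \<in> G" "E b0 = Max (E ` G)" by auto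
  have a0l: "a \<in> F \<Longrightarrow> E a \<le> E a0" for a
    unfolding a0(2) using F(1) by (intro Max_ge) auto
  have b0l: "b \<in> G \<Longrightarrow> E b \<le> E b0" for b
    unfolding b0(2) using G(1) by (intro Max_ge) auto
  have a0m: "a \<in> F \<Longrightarrow> a \<noteq> a0 \<Longrightarrow> E a < E a0" for a
    using a0l[of a] Einj[of a a0] by fastforce
  define q where "q = a0 + b0"
  have "Poly_Mapping.lookup (f * g) q = prod_fun (Poly_Mapping.lookup f) (Poly_Mapping.lookup g) q"
    by (simp add: times_poly_mapping.rep_eq)
  also have "\<dots> = (\<Sum>(a, b). Poly_Mapping.lookup f a * Poly_Mapping.lookup g b when q = a + b)"
    by (rule prod_fun_unfold_prod) auto
  also have "\<dots> = (\<Sum>ab. (case ab of (a, b) \<Rightarrow> Poly_Mapping.lookup f a * Poly_Mapping.lookup g b) when (a0, b0) = ab)"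
  proof (rule Sum_any.cong)
    fix ab :: "('a \<Rightarrow>\<^sub>0 nat) \<times> ('a \<Rightarrow>\<^sub>0 nat)"
    obtain a b where ab: "ab = (a, b)" by (cases ab)
    show "(case ab of (a, b) \<Rightarrow> Poly_Mapping.lookup f a * Poly_Mapping.lookup g b when q = a + b) =
      ((case ab of (a, b) \<Rightarrow> Poly_Mapping.lookup f a * Poly_Mapping.lookup g b) when (a0, b0) = ab)"
    proof (cases "Poly_Mapping.lookup f a = 0 \<or> Poly_Mapping.lookup g b = 0")
      case True then show ?thesis by (auto simp: ab when_def)
    next
      case False
      then have aF: "a \<in> F" and bG: "b \<in> G" by (auto simp: F_def G_def in_keys_iff)
      have "q = a + b \<longleftrightarrow> (a0, b0) = (a, b)"
      proof
        assume qe: "q = a + b"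
        have ee: "E a + E b = E a0 + E b0" using qe Eadd q_def by metis
        have "a = a0"
        proof (rule ccontr)
          assume "a \<noteq> a0"
          then have "E a + E b < E a0 + E b0"
            using a0m[OF aF] b0l[OF bG] by (simp add: add_less_le_mono)
          then show False using ee by simp
        qed
        then show "(a0, b0) = (a, b)" using qe q_def by simp
      qed (simp add: q_def)
      then show ?thesis by (simp add: ab when_def)
    qed
  qed
  also have "\<dots> = Poly_Mapping.lookup f a0 * Poly_Mapping.lookup g b0" by simp
  also have "\<dots> \<noteq> 0" using a0 b0 by (simp add: F_def G_def in_keys_iff)
  finally show ?thesis by auto
qed

lemma ideal_gen_ideal: "is_ideal (ideal_gen S)"
  unfolding ideal_gen_def is_ideal_def by auto

lemma ideal_gen_sub: "S \<subseteq> ideal_gen S"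
  unfolding ideal_gen_def by auto

lemma ideal_gen_least: "is_ideal I \<Longrightarrow> S \<subseteq> I \<Longrightarrow> ideal_gen S \<subseteq> I"
  unfolding ideal_gen_def by auto

lemma ideal_mult: "is_ideal I \<Longrightarrow> f \<in> I \<Longrightarrow> r * f \<in> I"
  unfolding is_ideal_def by auto

lemma ideal_mult_r: "is_ideal I \<Longrightarrow> f \<in> I \<Longrightarrow> f * r \<in> I"
  unfolding is_ideal_def by (auto simp: mult.commute)

lemma ideal_add: "is_ideal I \<Longrightarrow> f \<in> I \<Longrightarrow> g \<in> I \<Longrightarrow> f + g \<in> I"
  unfolding is_ideal_def by auto

lemma ideal_diff: "is_ideal I \<Longrightarrow> f \<in> I \<Longrightarrow> g \<in> I \<Longrightarrow> f - g \<in> I"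
proof -
  assume I: "is_ideal I" "f \<in> I" "g \<in> I"
  have "(-1) * g \<in> I" using I ideal_mult by blast
  then have "f + (-1) * g \<in> I" using I ideal_add by blast
  then show ?thesis by simp
qed

lemma ideal_sum:
  assumes I: "is_ideal I" and "finite A" "\<forall>x\<in>A. h x \<in> I" shows "sum h A \<in> I"
  using assms(2,3)
proof (induction A rule: finite_induct)
  case empty then show ?case using I unfolding is_ideal_def by auto
next
  case (insert x F) then show ?case by (simp add: ideal_add[OF I])
qed

lemma lookup_restr:
  fixes h :: "'b \<Rightarrow>\<^sub>0 'c::comm_monoid_add"
  assumes "finite B"
  shows "Poly_Mapping.lookup (\<Sum>\<alpha>\<in>B. Poly_Mapping.single \<alpha> (Poly_Mapping.lookup h \<alpha>)) \<beta>
     = (if \<beta> \<in> B then Poly_Mapping.lookup h \<beta> else 0)"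
proof -
  have "Poly_Mapping.lookup (\<Sum>\<alpha>\<in>B. Poly_Mapping.single \<alpha> (Poly_Mapping.lookup h \<alpha>)) \<beta>
     = (\<Sum>\<alpha>\<in>B. if \<alpha> = \<beta> then Poly_Mapping.lookup h \<alpha> else 0)"
    unfolding lookup_sum by (intro sum.cong refl) (auto simp: lookup_single when_def)
  also have "\<dots> = (if \<beta> \<in> B then Poly_Mapping.lookup h \<beta> else 0)"
    using assms by (simp add: sum.delta')
  finally show ?thesis .
qed

lemma keys_restr:
  fixes h :: "'b \<Rightarrow>\<^sub>0 'c::comm_monoid_add"
  assumes "B \<subseteq> Poly_Mapping.keys h"
  shows "Poly_Mapping.keys (\<Sum>\<alpha>\<in>B. Poly_Mapping.single \<alpha> (Poly_Mapping.lookup h \<alpha>)) = B"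
proof -
  have fB: "finite B" by (rule finite_subset[OF assms]) simp
  show ?thesis
  proof (rule set_eqI)
    fix \<beta>
    have "\<beta> \<in> Poly_Mapping.keys (\<Sum>\<alpha>\<in>B. Poly_Mapping.single \<alpha> (Poly_Mapping.lookup h \<alpha>))
       \<longleftrightarrow> (if \<beta> \<in> B then Poly_Mapping.lookup h \<beta> else 0) \<noteq> 0"
      by (simp only: in_keys_iff lookup_restr[OF fB])
    also have "\<dots> \<longleftrightarrow> \<beta> \<in> B" using assms by (auto simp: in_keys_iff)
    finally show "\<beta> \<in> Poly_Mapping.keys (\<Sum>\<alpha>\<in>B. Poly_Mapping.single \<alpha> (Poly_Mapping.lookup h \<alpha>)) \<longleftrightarrow> \<beta> \<in> B" .
  qed
qed

lemma poly_expand: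
  fixes h :: "'b \<Rightarrow>\<^sub>0 'c::comm_monoid_add"
  shows "h = (\<Sum>\<alpha>\<in>Poly_Mapping.keys h. Poly_Mapping.single \<alpha> (Poly_Mapping.lookup h \<alpha>))"
  by (rule poly_mapping_eqI) (auto simp: lookup_restr in_keys_iff)

lemma single_monom: "Poly_Mapping.single \<alpha> c = Poly_Mapping.single 0 c * (monom \<alpha> :: ('a, 'k::comm_ring_1) mpoly)"
  by (simp add: monom_def mult_single)

lemma monom_mult: "monom \<alpha> * monom \<beta> = (monom (\<alpha> + \<beta>) :: ('a, 'k::comm_ring_1) mpoly)"
  by (simp add: monom_def mult_single)

lemma ideal_of_terms:
  fixes h :: "('a, 'k::comm_ring_1) mpoly"
  assumes J: "is_ideal J" and t: "\<forall>\<alpha>\<in>Poly_Mapping.keys h. monom \<alpha> \<in> J"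
  shows "h \<in> J"
proof -
  have "(\<Sum>\<alpha>\<in>Poly_Mapping.keys h. Poly_Mapping.single \<alpha> (Poly_Mapping.lookup h \<alpha>)) \<in> J"
  proof (intro ideal_sum[OF J] ballI)
    fix \<alpha> assume "\<alpha> \<in> Poly_Mapping.keys h"
    then have "Poly_Mapping.single 0 (Poly_Mapping.lookup h \<alpha>) * monom \<alpha> \<in> J"
      using t ideal_mult[OF J] by blast
    then show "Poly_Mapping.single \<alpha> (Poly_Mapping.lookup h \<alpha>) \<in> J"
      by (simp only: single_monom[symmetric])
  qed simp
  then show ?thesis using poly_expand[of h] by simp
qed

lemma keys_monom [simp]: "Poly_Mapping.keys (monom \<alpha> :: ('a, 'k::comm_ring_1) mpoly) = {\<alpha>}"
  by (simp add: monom_def)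

lemma minus_add_exp:
  fixes \<mu> \<alpha> :: "'a \<Rightarrow>\<^sub>0 nat"
  assumes "mdvd \<mu> \<alpha>" shows "\<alpha> = (\<alpha> - \<mu>) + \<mu>"
  using assms by (intro poly_mapping_eqI) (simp add: lookup_add lookup_minus mdvd_def)

lemma mono_L:
  fixes L :: "('a, 'k::comm_ring_1) mpoly set"
  assumes "monomial_ideal L" "h \<in> L" "\<alpha> \<in> Poly_Mapping.keys h"
  shows "monom \<alpha> \<in> L"
proof -
  obtain M where LM: "L = ideal_gen (monom ` M)" using assms(1) monomial_ideal_def by blast
  define S where "S = {g :: ('a, 'k) mpoly. \<forall>\<alpha>\<in>Poly_Mapping.keys g. \<exists>\<mu>\<in>M. mdvd \<mu> \<alpha>}"
  have "is_ideal S"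
    unfolding is_ideal_def
  proof (intro conjI ballI allI)
    show "0 \<in> S" by (simp add: S_def)
  next
    fix f g assume "f \<in> S" "g \<in> S"
    then show "f + g \<in> S" using keys_add[of f g] by (auto simp: S_def)
  next
    fix f r assume f: "f \<in> S"
    show "r * f \<in> S" unfolding S_def
    proof (rule CollectI, rule ballI)
      fix \<gamma> assume "\<gamma> \<in> Poly_Mapping.keys (r * f)"
      then have "\<gamma> \<in> {a + b |a b. a \<in> Poly_Mapping.keys r \<and> b \<in> Poly_Mapping.keys f}"
        by (rule subsetD[OF keys_mult])
      then obtain a b where ab: "\<gamma> = a + b" "b \<in> Poly_Mapping.keys f" by blast
      then obtain \<mu> where mu: "\<mu> \<in> M" "mdvd \<mu> b" using f unfolding S_def by blast
      have "mdvd \<mu> \<gamma>" using mu(2) unfolding ab mdvd_def by (auto simp: lookup_add intro: trans_le_add2)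
      then show "\<exists>\<mu>\<in>M. mdvd \<mu> \<gamma>" using mu(1) by blast
    qed
  qed
  moreover have "monom ` M \<subseteq> S" by (auto simp: S_def mdvd_def)
  ultimately have "L \<subseteq> S" using LM ideal_gen_least by blast
  then obtain \<mu> where mu: "\<mu> \<in> M" "mdvd \<mu> \<alpha>" using assms S_def by blast
  have "monom \<mu> \<in> L" using LM ideal_gen_sub mu by blast
  then have "monom (\<alpha> - \<mu>) * monom \<mu> \<in> L" using LM ideal_gen_ideal ideal_mult by blast
  then show ?thesis using minus_add_exp[OF mu(2)] by (simp add: monom_mult)
qed

lemma var_split:
  fixes \<alpha> :: "'a \<Rightarrow>\<^sub>0 nat"
  assumes "0 < Poly_Mapping.lookup \<alpha> i" shows "\<alpha> = var_exp i + (\<alpha> - var_exp i)"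
  using assms by (intro poly_mapping_eqI) (auto simp: lookup_add lookup_minus var_exp_def lookup_single when_def)

definition deg :: "('a::finite \<Rightarrow>\<^sub>0 nat) \<Rightarrow> nat" where
  "deg \<alpha> = (\<Sum>q\<in>UNIV. Poly_Mapping.lookup \<alpha> q)"

lemma deg_add: "deg (\<alpha> + \<beta>) = deg \<alpha> + deg \<beta>"
  by (simp add: deg_def lookup_add sum.distrib)

lemma deg_var: "deg (var_exp i) = 1"
proof -
  have "deg (var_exp i) = (\<Sum>q\<in>UNIV. if q = i then 1 else 0)"
    unfolding deg_def var_exp_def by (intro sum.cong refl) (auto simp: lookup_single when_def)
  then show ?thesis by simp
qed

lemma deg_mono: "mdvd \<alpha> \<beta> \<Longrightarrow> deg \<alpha> \<le> deg \<beta>"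
  unfolding deg_def mdvd_def by (intro sum_mono) auto

lemma deg_zero: "deg \<alpha> = 0 \<Longrightarrow> \<alpha> = 0"
  by (rule poly_mapping_eqI) (simp add: deg_def)

lemma prime_var:
  fixes p :: "('a::finite, 'k::comm_ring_1) mpoly set"
  assumes pr: "is_prime_ideal p"
  shows "monom \<alpha> \<in> p \<Longrightarrow> \<exists>i. 0 < Poly_Mapping.lookup \<alpha> i \<and> monom (var_exp i) \<in> p"
proof (induction "deg \<alpha>" arbitrary: \<alpha> rule: less_induct)
  case less
  show ?case
  proof (cases "\<alpha> = 0")
    case True
    then have "1 \<in> p" using less.prems by (simp add: monom_def)
    then show ?thesis using pr unfolding is_prime_ideal_def by blast
  next
    case False
    then obtain i where i: "0 < Poly_Mapping.lookup \<alpha> i"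
      by (metis gr0I poly_mapping_eqI lookup_zero)
    have "monom (var_exp i) * monom (\<alpha> - var_exp i) \<in> p"
      using less.prems var_split[OF i] by (simp add: monom_mult)
    then have "monom (var_exp i) \<in> p \<or> monom (\<alpha> - var_exp i) \<in> p"
      using pr is_prime_ideal_def by blast
    then show ?thesis
    proof
      assume "monom (var_exp i) \<in> p" then show ?thesis using i by blast
    next
      assume m: "monom (\<alpha> - var_exp i) \<in> p"
      have "deg \<alpha> = 1 + deg (\<alpha> - var_exp i)"
        using var_split[OF i] deg_add deg_var by metis
      then obtain j where "0 < Poly_Mapping.lookup (\<alpha> - var_exp i) j" "monom (var_exp j) \<in> p"
        using less.hyps m by fastforce
      then have "0 < Poly_Mapping.lookup \<alpha> j" "monom (var_exp j) \<in> p" by (auto simp: lookup_minus)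
      then show ?thesis by blast
    qed
  qed
qed

lemma chain_mon_Cons: "chain_mon (x # C) = var_exp x + chain_mon C"
  by (simp add: chain_mon_def)

lemma deg_chain: "deg (chain_mon C) = length C"
  by (induction C) (auto simp: chain_mon_Cons deg_add deg_var, simp add: chain_mon_def deg_def)

lemma chain_mon_notin: "a \<notin> set C \<Longrightarrow> Poly_Mapping.lookup (chain_mon C) a = 0"
  by (induction C) (auto simp: chain_mon_Cons lookup_add var_exp_def lookup_single when_def, simp add: chain_mon_def)

lemma chain_mon_rep: "chain_mon (replicate N a) = Poly_Mapping.single a N"
  by (induction N) (auto simp: chain_mon_Cons var_exp_def single_add[symmetric], simp add: chain_mon_def)

lemma sorted_wrt_comp: "sorted_wrt R xs \<Longrightarrow> x \<in> set xs \<Longrightarrow> y \<in> set xs \<Longrightarrow> x = y \<or> R x y \<or> R y x"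
  by (induction xs) auto

lemma sorted_rep: "sorted_wrt (\<le>) (replicate N (a::'a::order))"
  by (induction N) auto

lemma chain_lemma:
  fixes a b :: "'a::{finite,order}"
  assumes ab: "a \<le> b" and m: "m = Poly_Mapping.single a N + r" and dr: "deg r < N"
  shows "\<exists>C. longest_bchain b m C \<and> goes_through b a C"
proof -
  define P where "P k \<longleftrightarrow> (\<exists>C. is_bchain b C \<and> chain_in C m \<and> length C = k)" for k
  have "is_bchain b (replicate N a)"
    using ab dr unfolding is_bchain_def by (auto simp: sorted_rep)
  moreover have "chain_in (replicate N a) m"
    unfolding chain_in_def chain_mon_rep mdvd_def m by (simp add: lookup_add)
  ultimately have PN: "P N" unfolding P_def by auto
  have bound: "P y \<Longrightarrow> y < Suc (deg m)" for y
    unfolding P_def chain_in_def using deg_mono deg_chain by (metis le_imp_less_Suc)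
  obtain k where k: "P k" "\<forall>y. P y \<longrightarrow> y \<le> k"
    using ex_has_greatest_nat[of P N "\<lambda>x. x" "Suc (deg m)"] PN bound by blast
  then obtain C where C: "is_bchain b C" "chain_in C m" "length C = k" unfolding P_def by blast
  have lC: "longest_bchain b m C"
    unfolding longest_bchain_def using C k P_def by auto
  have "a \<in> set C"
  proof (rule ccontr)
    assume "a \<notin> set C"
    then have z: "Poly_Mapping.lookup (chain_mon C) a = 0" by (rule chain_mon_notin)
    have "length C = deg (chain_mon C)" by (simp add: deg_chain)
    also have "\<dots> \<le> deg r"
      unfolding deg_def
    proof (rule sum_mono)
      fix q
      show "Poly_Mapping.lookup (chain_mon C) q \<le> Poly_Mapping.lookup r q"
        using C(2) z unfolding chain_in_def mdvd_def m
        by (cases "q = a") (auto simp: lookup_add lookup_single when_def dest: spec[of _ q])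
    qed
    finally have "length C < N" using dr by simp
    moreover have "N \<le> length C" using k PN C by auto
    ultimately show False by simp
  qed
  have sC: "sorted_wrt (\<le>) C" using C(1) unfolding is_bchain_def by simp
  have "\<forall>x\<in>set C. a \<le> x \<or> x \<le> a"
  proof
    fix x assume "x \<in> set C"
    then have "a = x \<or> a \<le> x \<or> x \<le> a" using sorted_wrt_comp[OF sC \<open>a \<in> set C\<close>] by blast
    then show "a \<le> x \<or> x \<le> a" by auto
  qed
  then have "goes_through b a C"
    unfolding goes_through_def using ab by blast
  then show ?thesis using lC by blast
qed


theorem proposition3p18:
  fixes L :: "('a::{finite,order}, 'k::field) mpoly set"
    and p :: "('a, 'k) mpoly set"
  assumes "P_stable L"
    and "associated_prime L p"
  shows "\<exists>I. poset_ideal I \<and> p = ideal_gen ((\<lambda>i. monom (var_exp i)) ` I)"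
proof -
  have mL: "monomial_ideal L" using assms(1) P_stable_def by blast
  then obtain M where LM: "L = ideal_gen (monom ` M)" using monomial_ideal_def by blast
  have idL: "is_ideal L" using LM ideal_gen_ideal by blast
  have monoL: "\<And>h \<alpha>. h \<in> L \<Longrightarrow> \<alpha> \<in> Poly_Mapping.keys h \<Longrightarrow> monom \<alpha> \<in> L"
    using mono_L[OF mL] by blast
  have mulL: "\<And>\<alpha> \<beta>. monom \<alpha> \<in> L \<Longrightarrow> monom (\<beta> + \<alpha>) \<in> L"
    using ideal_mult[OF idL] monom_mult by metis
  have pr: "is_prime_ideal p" using assms(2) associated_prime_def by blast
  have idp: "is_ideal p" and one: "1 \<notin> p"
    and prm: "\<And>f g. f * g \<in> p \<Longrightarrow> f \<in> p \<or> g \<in> p"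
    using pr unfolding is_prime_ideal_def by blast+
  obtain f where pf: "p = {g. g * f \<in> L}" using assms(2) associated_prime_def by blast
  define N where "N h = card {\<alpha> \<in> Poly_Mapping.keys h. monom \<alpha> \<notin> L}" for h :: "('a, 'k) mpoly"
  define Q where "Q h \<longleftrightarrow> p = {g. g * h \<in> L}" for h
  obtain f0 where Qf0: "Q f0" and minf0: "\<forall>h. Q h \<longrightarrow> N f0 \<le> N h"
    using ex_has_least_nat[of Q f N] pf Q_def by blast
  have pf0: "\<And>g. g \<in> p \<longleftrightarrow> g * f0 \<in> L" using Qf0 Q_def by blast
  have claimC: "monom (u + \<alpha>) \<notin> L"
    if u: "monom u \<notin> p" and a: "\<alpha> \<in> Poly_Mapping.keys f0" "monom \<alpha> \<notin> L" for u \<alpha>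
  proof
    assume ua: "monom (u + \<alpha>) \<in> L"
    define h where "h = monom u * f0"
    have "Q h" unfolding Q_def
    proof (intro set_eqI iffI; simp)
      fix g assume "g \<in> p"
      then have "g * monom u \<in> p" using ideal_mult_r[OF idp] by blast
      then show "g * h \<in> L" using pf0 by (simp add: h_def mult.assoc)
    next
      fix g assume "g * h \<in> L"
      then have "g * monom u \<in> p" using pf0 by (simp add: h_def mult.assoc)
      then show "g \<in> p" using prm u by blast
    qed
    then have le: "N f0 \<le> N h" using minf0 by blast
    define A where "A = {\<alpha> \<in> Poly_Mapping.keys f0. monom \<alpha> \<notin> L}"
    define A' where "A' = {\<alpha> \<in> Poly_Mapping.keys f0. monom (u + \<alpha>) \<notin> L}"
    have "A' \<subseteq> A" unfolding A_def A'_def using mulL by blast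
    moreover have "\<alpha> \<in> A - A'" unfolding A_def A'_def using a ua by blast
    moreover have "finite A" unfolding A_def by simp
    ultimately have lt: "card A' < card A" by (metis Diff_iff psubsetI psubset_card_mono)
    have "{\<beta> \<in> Poly_Mapping.keys h. monom \<beta> \<notin> L} \<subseteq> (\<lambda>\<alpha>. u + \<alpha>) ` A'"
    proof
      fix \<beta> assume b: "\<beta> \<in> {\<beta> \<in> Poly_Mapping.keys h. monom \<beta> \<notin> L}"
      then have "\<beta> \<in> {x + y |x y. x \<in> Poly_Mapping.keys (monom u :: ('a,'k) mpoly) \<and> y \<in> Poly_Mapping.keys f0}"
        unfolding h_def by (intro subsetD[OF keys_mult]) blast
      then obtain x y where "\<beta> = x + y" "x \<in> Poly_Mapping.keys (monom u :: ('a,'k) mpoly)" "y \<in> Poly_Mapping.keys f0"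
        by blast
      then show "\<beta> \<in> (\<lambda>\<alpha>. u + \<alpha>) ` A'" using b unfolding A'_def by auto
    qed
    then have "N h \<le> card ((\<lambda>\<alpha>. u + \<alpha>) ` A')" unfolding N_def
      by (intro card_mono) (auto simp: A'_def)
    also have "\<dots> \<le> card A'" by (rule card_image_le) (simp add: A'_def)
    finally show False using lt le unfolding N_def A_def by simp
  qed
  define A where "A = {\<alpha> \<in> Poly_Mapping.keys f0. monom \<alpha> \<notin> L}"
  define f' where "f' = (\<Sum>\<alpha>\<in>A. Poly_Mapping.single \<alpha> (Poly_Mapping.lookup f0 \<alpha>))"
  have kf': "Poly_Mapping.keys f' = A" unfolding f'_def by (rule keys_restr) (auto simp: A_def)
  have fA: "finite A" by (simp add: A_def)
  have f0f': "f0 - f' \<in> L"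
  proof (rule ideal_of_terms[OF idL], intro ballI)
    fix \<beta> assume "\<beta> \<in> Poly_Mapping.keys (f0 - f')"
    then have "\<beta> \<in> Poly_Mapping.keys f0" "\<beta> \<notin> A"
      by (auto simp: in_keys_iff lookup_minus f'_def lookup_restr[OF fA] split: if_splits)
    then show "monom \<beta> \<in> L" unfolding A_def by blast
  qed
  have "f0 \<notin> L"
  proof
    assume "f0 \<in> L" then have "1 \<in> p" using pf0 by simp
    then show False using one by blast
  qed
  then have "A \<noteq> {}" using ideal_of_terms[OF idL, of f0] unfolding A_def by blast
  then have f'0: "f' \<noteq> 0" using kf' by auto
  have timesf': "g * f' \<in> L" if "g \<in> p" for g
  proof -
    have "g * f0 \<in> L" using that pf0 by blast
    moreover have "g * (f0 - f') \<in> L" using f0f' ideal_mult[OF idL] by blast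
    ultimately have "g * f0 - g * (f0 - f') \<in> L" by (rule ideal_diff[OF idL])
    then show ?thesis by (simp add: algebra_simps)
  qed
  have key: "g * f0 \<notin> L" if g0: "g \<noteq> 0" and gp: "\<forall>\<beta>\<in>Poly_Mapping.keys g. monom \<beta> \<notin> p" for g
  proof
    assume "g * f0 \<in> L"
    then have "g \<in> p" using pf0 by blast
    then have gf: "g * f' \<in> L" by (rule timesf')
    have "g * f' \<noteq> 0" using nzd[OF g0 f'0] .
    then obtain \<gamma> where gk: "\<gamma> \<in> Poly_Mapping.keys (g * f')" by (metis ex_in_conv keys_eq_empty)
    then have "\<gamma> \<in> {x + y |x y. x \<in> Poly_Mapping.keys g \<and> y \<in> Poly_Mapping.keys f'}"
      by (rule subsetD[OF keys_mult])
    then obtain \<beta> \<alpha> where ga: "\<gamma> = \<beta> + \<alpha>" "\<beta> \<in> Poly_Mapping.keys g" "\<alpha> \<in> A"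
      using kf' by blast
    have "monom \<gamma> \<in> L" using monoL gf gk by blast
    moreover have "monom (\<beta> + \<alpha>) \<notin> L"
      using claimC gp ga A_def by blast
    ultimately show False using ga by simp
  qed
  have pmono: "monom \<alpha> \<in> p" if gp: "g \<in> p" and ag: "\<alpha> \<in> Poly_Mapping.keys g" for g \<alpha>
  proof (rule ccontr)
    assume na: "monom \<alpha> \<notin> p"
    define B where "B = {\<beta> \<in> Poly_Mapping.keys g. monom \<beta> \<notin> p}"
    define g' where "g' = (\<Sum>\<beta>\<in>B. Poly_Mapping.single \<beta> (Poly_Mapping.lookup g \<beta>))"
    have fB: "finite B" by (simp add: B_def)
    have kg': "Poly_Mapping.keys g' = B" unfolding g'_def by (rule keys_restr) (auto simp: B_def)
    have "g - g' \<in> p"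
    proof (rule ideal_of_terms[OF idp], intro ballI)
      fix \<beta> assume "\<beta> \<in> Poly_Mapping.keys (g - g')"
      then have "\<beta> \<in> Poly_Mapping.keys g" "\<beta> \<notin> B"
        by (auto simp: in_keys_iff lookup_minus g'_def lookup_restr[OF fB] split: if_splits)
      then show "monom \<beta> \<in> p" unfolding B_def by blast
    qed
    then have "g - (g - g') \<in> p" using ideal_diff[OF idp gp] by blast
    then have g'p: "g' \<in> p" by simp
    have "\<alpha> \<in> B" using ag na B_def by blast
    then have "g' \<noteq> 0" using kg' by auto
    moreover have "\<forall>\<beta>\<in>Poly_Mapping.keys g'. monom \<beta> \<notin> p" using kg' B_def by blast
    ultimately have "g' * f0 \<notin> L" by (rule key)
    then show False using g'p pf0 by blast
  qed
  define I where "I = {i. monom (var_exp i) \<in> p}"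
  have pI: "p = ideal_gen ((\<lambda>i. monom (var_exp i)) ` I)"
  proof
    show "ideal_gen ((\<lambda>i. monom (var_exp i)) ` I) \<subseteq> p"
      by (rule ideal_gen_least[OF idp]) (auto simp: I_def)
  next
    show "p \<subseteq> ideal_gen ((\<lambda>i. monom (var_exp i)) ` I)"
    proof
      fix g assume gp: "g \<in> p"
      show "g \<in> ideal_gen ((\<lambda>i. monom (var_exp i)) ` I)"
      proof (rule ideal_of_terms[OF ideal_gen_ideal], intro ballI)
        fix \<alpha> assume "\<alpha> \<in> Poly_Mapping.keys g"
        then have "monom \<alpha> \<in> p" using pmono gp by blast
        then obtain i where i: "0 < Poly_Mapping.lookup \<alpha> i" "monom (var_exp i) \<in> p"
          using prime_var[OF pr] by blast
        have "i \<in> I" using i(2) I_def by simp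
        then have "monom (var_exp i) \<in> (\<lambda>i. monom (var_exp i)) ` I" by (rule imageI)
        then have "monom (var_exp i) \<in> ideal_gen ((\<lambda>i. monom (var_exp i)) ` I)"
          by (rule subsetD[OF ideal_gen_sub])
        then have "monom (\<alpha> - var_exp i) * monom (var_exp i) \<in> ideal_gen ((\<lambda>i. monom (var_exp i)) ` I)"
          by (rule ideal_mult[OF ideal_gen_ideal])
        then show "monom \<alpha> \<in> ideal_gen ((\<lambda>i. monom (var_exp i)) ` I)"
          using var_split[OF i(1)] by (metis monom_mult add.commute)
      qed
    qed
  qed
  have pows: "monom (Poly_Mapping.single a n) \<notin> p" if "monom (var_exp a) \<notin> p" for a n
  proof (induction n)
    case 0 then show ?case using one by (simp add: monom_def)
  next
    case (Suc n)
    have "Poly_Mapping.single a (Suc n) = var_exp a + Poly_Mapping.single a n"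
      by (simp add: var_exp_def single_add[symmetric])
    then have "monom (Poly_Mapping.single a (Suc n)) = monom (var_exp a) * monom (Poly_Mapping.single a n)"
      by (simp add: monom_mult)
    then show ?case using prm that Suc by metis
  qed
  have "poset_ideal I"
    unfolding poset_ideal_def
  proof (intro ballI allI impI)
    fix b a assume bI: "b \<in> I" and ab: "a \<le> b"
    show "a \<in> I"
    proof (rule ccontr)
      assume "a \<notin> I"
      then have na: "monom (var_exp a) \<notin> p" by (simp add: I_def)
      have "monom (var_exp b) * f' \<in> L" using bI timesf' I_def by blast
      moreover have "monom (var_exp b) \<noteq> (0::('a,'k) mpoly)"
        by (metis keys_monom keys_zero empty_not_insert)
      then have "monom (var_exp b) * f' \<noteq> 0"
        using nzd[OF _ f'0] by blast
      then obtain \<gamma> where \<gamma>: "\<gamma> \<in> Poly_Mapping.keys (monom (var_exp b) * f')"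
        by (metis ex_in_conv keys_eq_empty)
      ultimately have g\<gamma>: "monom \<gamma> \<in> L" using monoL by blast
      have "\<gamma> \<in> {x + y |x y. x \<in> Poly_Mapping.keys (monom (var_exp b) :: ('a,'k) mpoly) \<and> y \<in> Poly_Mapping.keys f'}"
        using \<gamma> by (rule subsetD[OF keys_mult])
      then obtain \<alpha> where \<alpha>: "\<gamma> = var_exp b + \<alpha>" "\<alpha> \<in> A"
        using kf' by auto
      have \<alpha>0: "\<alpha> \<in> Poly_Mapping.keys f0" "monom \<alpha> \<notin> L" using \<alpha>(2) A_def by auto
      define r where "r = var_exp b + \<alpha>"
      define N0 where "N0 = Suc (deg r)"
      define n where "n = Poly_Mapping.single a N0 + \<alpha>"
      have c1: "monom (Poly_Mapping.single a (Suc N0) + \<alpha>) \<notin> L"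
        using claimC[OF pows[OF na] \<alpha>0] .
      have am: "antichain_mon {b} = var_exp b" by (simp add: antichain_mon_def)
      have ac: "antichain {b}" by (simp add: antichain_def)
      have m_eq: "n + antichain_mon {b} = Poly_Mapping.single a N0 + r"
        by (simp add: am n_def r_def algebra_simps)
      have inL: "monom (n + antichain_mon {b}) \<in> L"
        using mulL[OF g\<gamma>] \<alpha>(1) m_eq r_def by metis
      have "\<exists>C. longest_bchain b (n + antichain_mon {b}) C \<and> goes_through b a C"
        by (rule chain_lemma[OF ab m_eq]) (simp add: N0_def)
      then have "\<forall>b'\<in>{b}. \<exists>C. longest_bchain b' (n + antichain_mon {b}) C \<and> goes_through b' a C"
        by simp
      then have "monom (n + var_exp a) \<in> L"
        using assms(1) ac inL unfolding P_stable_def by blast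
      moreover have "n + var_exp a = Poly_Mapping.single a (Suc N0) + \<alpha>"
        by (simp add: n_def var_exp_def single_add[symmetric] algebra_simps)
      ultimately show False using c1 by simp
    qed
  qed
  then show ?thesis using pI by blast
qed

end
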